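(* There exist constants $c>0$ and $m_0$ such that for every integer $m\ge m_0$ the following holds: every unlabeled tabletop rearrangement instance with $n=m^2$ congruent objects whose unlabeled dependency graph is isomorphic to the dependency grid $\mathcal{D}(m,2m)$ (by an isomorphism sending start vertices to start vertices) has $\mathrm{MRB}\ge c\,m=c\sqrt{n}$.
   Context: An unlabeled tabletop rearrangement instance consists of $n$ congruent, interchangeable objects in a bounded planar workspace with a feasible start arrangement and a feasible goal arrangement (poses in $SE(2)$; feasible means no two placed footprints have intersecting interiors). Its unlabeled dependency graph is bipartite, with a start vertex for each start pose and a goal vertex for each goal pose, and an edge between a start and a goal vertex iff footprints at those poses overlap. A plan with external buffers: each object is picked from its start pose exactly once and either placed at an unoccupied goal pose or into an external buffer (unlimited capacity), in the latter case later moved from the buffer to an unoccupied goal pose; an object may be placed at a goal pose only if it overlaps no object currently in the workspace; at the end all goal poses are occupied. Running buffers at a moment = number of objects in buffers; $\mathrm{MRB}$ = minimum over plans of the maximum number of running buffers. The dependency grid $\mathcal{D}(w,h)$ is the grid graph with vertices $v_{x,y}$, $1\le x\le w$ (columns), $1\le y\le h$ (rows), where $v_{x,y}$ and $v_{x',y'}$ are adjacent iff $|x-x'|+|y-y'|=1$; $v_{x,y}$ is a start vertex if $x+y$ is even and a goal vertex otherwise. *)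

theory Defs
  imports "HOL-Analysis.Analysis"
begin

text \<open>The plane is modelled by the complex numbers. A pose in SE(2) is a pair
(translation, rotation angle). All objects are congruent: they share one footprint
shape F (given in the object frame); the footprint of an object at pose p is the image
of F under the rigid motion p.\<close>

type_synonym pose = "complex \<times> real"

definition footprint :: "complex set \<Rightarrow> pose \<Rightarrow> complex set" where
  "footprint F p = (\<lambda>z. fst p + cis (snd p) * z) ` F"

definition overlap :: "complex set \<Rightarrow> pose \<Rightarrow> pose \<Rightarrow> bool" where
  "overlap F p q \<longleftrightarrow> interior (footprint F p) \<inter> interior (footprint F q) \<noteq> {}"

definition feasible_arr :: "complex set \<Rightarrow> nat \<Rightarrow> (nat \<Rightarrow> pose) \<Rightarrow> bool" where
  "feasible_arr F n P \<longleftrightarrow> (\<forall>i<n. \<forall>j<n. i \<noteq> j \<longrightarrow> \<not> overlap F (P i) (P j))"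

definition utr_instance ::
  "complex set \<Rightarrow> complex set \<Rightarrow> nat \<Rightarrow> (nat \<Rightarrow> pose) \<Rightarrow> (nat \<Rightarrow> pose) \<Rightarrow> bool" where
  "utr_instance F W n s g \<longleftrightarrow>
     bounded W \<and>
     (\<forall>i<n. footprint F (s i) \<subseteq> W) \<and> (\<forall>j<n. footprint F (g j) \<subseteq> W) \<and>
     feasible_arr F n s \<and> feasible_arr F n g"

text \<open>Actions: move the object at start pose i directly to goal pose j; move the object
at start pose i into the external buffer; move some buffered object to goal pose j
(objects are interchangeable, so buffered objects need no identity).
A state is (start poses still occupied, goal poses occupied, number of objects in buffer).\<close>

datatype action = ToGoal nat nat | ToBuffer nat | FromBuffer nat

type_synonym state = "nat set \<times> nat set \<times> nat"

definition placeable ::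
  "complex set \<Rightarrow> (nat \<Rightarrow> pose) \<Rightarrow> (nat \<Rightarrow> pose) \<Rightarrow> nat set \<Rightarrow> nat set \<Rightarrow> pose \<Rightarrow> bool" where
  "placeable F s g S G q \<longleftrightarrow>
     (\<forall>i\<in>S. \<not> overlap F (s i) q) \<and> (\<forall>j\<in>G. \<not> overlap F (g j) q)"

fun step ::
  "complex set \<Rightarrow> nat \<Rightarrow> (nat \<Rightarrow> pose) \<Rightarrow> (nat \<Rightarrow> pose) \<Rightarrow> action \<Rightarrow> state \<Rightarrow> state option" where
  "step F n s g (ToGoal i j) (S, G, b) =
     (if i \<in> S \<and> j < n \<and> j \<notin> G \<and> placeable F s g (S - {i}) G (g j)
      then Some (S - {i}, insert j G, b) else None)"
| "step F n s g (ToBuffer i) (S, G, b) =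
     (if i \<in> S then Some (S - {i}, G, Suc b) else None)"
| "step F n s g (FromBuffer j) (S, G, b) =
     (if 0 < b \<and> j < n \<and> j \<notin> G \<and> placeable F s g S G (g j)
      then Some (S, insert j G, b - 1) else None)"

fun exec ::
  "complex set \<Rightarrow> nat \<Rightarrow> (nat \<Rightarrow> pose) \<Rightarrow> (nat \<Rightarrow> pose) \<Rightarrow> state \<Rightarrow> action list \<Rightarrow> state list option" where
  "exec F n s g st [] = Some [st]"
| "exec F n s g st (a # as) =
     (case step F n s g a st of
        None \<Rightarrow> None
      | Some st' \<Rightarrow> map_option (Cons st) (exec F n s g st' as))"

definition init_state :: "nat \<Rightarrow> state" where
  "init_state n = ({..<n}, {}, 0)"

definition valid_plan ::
  "complex set \<Rightarrow> nat \<Rightarrow> (nat \<Rightarrow> pose) \<Rightarrow> (nat \<Rightarrow> pose) \<Rightarrow> action list \<Rightarrow> bool" where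
  "valid_plan F n s g p \<longleftrightarrow>
     (\<exists>sts. exec F n s g (init_state n) p = Some sts \<and> fst (snd (last sts)) = {..<n})"

definition max_running_buffers ::
  "complex set \<Rightarrow> nat \<Rightarrow> (nat \<Rightarrow> pose) \<Rightarrow> (nat \<Rightarrow> pose) \<Rightarrow> action list \<Rightarrow> nat" where
  "max_running_buffers F n s g p = Max ((\<lambda>st. snd (snd st)) ` set (the (exec F n s g (init_state n) p)))"

definition MRB :: "complex set \<Rightarrow> nat \<Rightarrow> (nat \<Rightarrow> pose) \<Rightarrow> (nat \<Rightarrow> pose) \<Rightarrow> nat" where
  "MRB F n s g = (INF p \<in> {p. valid_plan F n s g p}. max_running_buffers F n s g p)"

definition grid_vertex :: "nat \<Rightarrow> nat \<Rightarrow> nat \<times> nat \<Rightarrow> bool" where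
  "grid_vertex w h v \<longleftrightarrow> 1 \<le> fst v \<and> fst v \<le> w \<and> 1 \<le> snd v \<and> snd v \<le> h"

definition grid_starts :: "nat \<Rightarrow> nat \<Rightarrow> (nat \<times> nat) set" where
  "grid_starts w h = {v. grid_vertex w h v \<and> even (fst v + snd v)}"

definition grid_goals :: "nat \<Rightarrow> nat \<Rightarrow> (nat \<times> nat) set" where
  "grid_goals w h = {v. grid_vertex w h v \<and> odd (fst v + snd v)}"

definition grid_adj :: "nat \<times> nat \<Rightarrow> nat \<times> nat \<Rightarrow> bool" where
  "grid_adj u v \<longleftrightarrow> \<bar>int (fst u) - int (fst v)\<bar> + \<bar>int (snd u) - int (snd v)\<bar> = 1"

definition dep_graph_iso_grid ::
  "complex set \<Rightarrow> nat \<Rightarrow> (nat \<Rightarrow> pose) \<Rightarrow> (nat \<Rightarrow> pose) \<Rightarrow> nat \<Rightarrow> nat \<Rightarrow> bool" where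
  "dep_graph_iso_grid F n s g w h \<longleftrightarrow>
     (\<exists>\<sigma> \<tau>. bij_betw \<sigma> {..<n} (grid_starts w h) \<and> bij_betw \<tau> {..<n} (grid_goals w h) \<and>
        (\<forall>i<n. \<forall>j<n. overlap F (s i) (g j) \<longleftrightarrow> grid_adj (\<sigma> i) (\<tau> j)))"

end

theory Submission imports Defs begin

lemma strip_class:
  fixes GI SI :: "nat \<times> nat \<Rightarrow> bool"
  assumes H1: "\<And>x k. GI (x,k) \<Longrightarrow> SI (Suc x,k) \<Longrightarrow> False"
    and H2: "\<And>x k. SI (x,k) \<Longrightarrow> GI (Suc x,k) \<Longrightarrow> False"
    and cl: "\<forall>x\<in>{1..m}. GI (x,k) \<or> SI (x,k)"
  shows "(\<forall>x\<in>{1..m}. GI (x,k)) \<or> (\<forall>x\<in>{1..m}. SI (x,k))"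
proof (cases "m = 0")
  case True then show ?thesis by auto
next
  case False
  have "GI (1,k) \<or> SI (1,k)" using cl False by auto
  then show ?thesis
  proof
    assume g1: "GI (1,k)"
    have "\<forall>x. 1 \<le> x \<longrightarrow> x \<le> m \<longrightarrow> GI (x,k)"
    proof
      fix x show "1 \<le> x \<longrightarrow> x \<le> m \<longrightarrow> GI (x,k)"
      proof (induction x)
        case 0 then show ?case by simp
      next
        case (Suc x)
        show ?case
        proof (intro impI)
          assume a: "1 \<le> Suc x" "Suc x \<le> m"
          show "GI (Suc x, k)"
          proof (cases "x = 0")
            case True then show ?thesis using g1 by simp
          next
            case False
            then have "GI (x,k)" using Suc a by simp
            moreover have "GI (Suc x,k) \<or> SI (Suc x,k)" using cl a by auto
            ultimately show ?thesis using H1 by blast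
          qed
        qed
      qed
    qed
    then show ?thesis by auto
  next
    assume g1: "SI (1,k)"
    have "\<forall>x. 1 \<le> x \<longrightarrow> x \<le> m \<longrightarrow> SI (x,k)"
    proof
      fix x show "1 \<le> x \<longrightarrow> x \<le> m \<longrightarrow> SI (x,k)"
      proof (induction x)
        case 0 then show ?case by simp
      next
        case (Suc x)
        show ?case
        proof (intro impI)
          assume a: "1 \<le> Suc x" "Suc x \<le> m"
          show "SI (Suc x, k)"
          proof (cases "x = 0")
            case True then show ?thesis using g1 by simp
          next
            case False
            then have "SI (x,k)" using Suc a by simp
            moreover have "GI (Suc x,k) \<or> SI (Suc x,k)" using cl a by auto
            ultimately show ?thesis using H2 by blast
          qed
        qed
      qed
    qed
    then show ?thesis by auto
  qed
qed

lemma col_prop: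
  fixes P Q :: "nat \<Rightarrow> bool"
  assumes V: "\<And>k. P k \<Longrightarrow> Q (Suc k) \<Longrightarrow> False"
    and ne: "\<forall>k\<in>{k1..k2}. P k \<or> Q k"
    and p1: "P k1" and le: "k1 \<le> k2"
  shows "P k2"
  using le ne
proof (induction k2 rule: dec_induct)
  case base then show ?case using p1 by simp
next
  case (step k)
  then have "P k" by auto
  moreover have "P (Suc k) \<or> Q (Suc k)" using step by auto
  ultimately show ?case using V by blast
qed

lemma card_odds: "h \<le> card {x\<in>{1..m}. odd x}" if "h = m div 2"
proof -
  have "(\<lambda>i. 2*i+1) ` {0..<h} \<subseteq> {x\<in>{1..m}. odd x}" using that by auto
  moreover have "card ((\<lambda>i. 2*i+1) ` {0..<h}) = h" by (subst card_image) (auto simp: inj_on_def)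
  moreover have "finite {x\<in>{1..m}. odd x}" by simp
  ultimately show ?thesis using card_mono by metis
qed

lemma card_evens: "h \<le> card {x\<in>{1..m}. even x}" if "h = m div 2"
proof -
  have "(\<lambda>i. 2*i+2) ` {0..<h} \<subseteq> {x\<in>{1..m}. even x}" using that by auto
  moreover have "card ((\<lambda>i. 2*i+2) ` {0..<h}) = h" by (subst card_image) (auto simp: inj_on_def)
  moreover have "finite {x\<in>{1..m}. even x}" by simp
  ultimately show ?thesis using card_mono by metis
qed

lemma comb_abstract:
  fixes GI SI :: "nat \<times> nat \<Rightarrow> bool" and m h :: nat
  assumes hdef: "h = m div 2"
    and disj: "\<And>d. \<not> (GI d \<and> SI d)"
    and H1: "\<And>x k. GI (x,k) \<Longrightarrow> SI (Suc x,k) \<Longrightarrow> False"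
    and H2: "\<And>x k. SI (x,k) \<Longrightarrow> GI (Suc x,k) \<Longrightarrow> False"
    and V1: "\<And>x k. odd x \<Longrightarrow> GI (x,k) \<Longrightarrow> SI (x,Suc k) \<Longrightarrow> False"
    and V2: "\<And>x k. even x \<Longrightarrow> SI (x,k) \<Longrightarrow> GI (x,Suc k) \<Longrightarrow> False"
    and cardG: "card {d\<in>{1..m}\<times>{1..m}. GI d} = m * h"
  shows "h \<le> card {d\<in>{1..m}\<times>{1..m}. \<not> GI d \<and> \<not> SI d}"
proof (rule ccontr)
  define D where "D = {1..m}\<times>{1..m}"
  define E where "E = {d\<in>D. \<not> GI d \<and> \<not> SI d}"
  assume "\<not> h \<le> card {d\<in>{1..m}\<times>{1..m}. \<not> GI d \<and> \<not> SI d}"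
  then have Eh: "card E < h" unfolding E_def D_def by simp
  have finE: "finite E" unfolding E_def D_def by simp
  define C where "C = {k\<in>{1..m}. \<forall>x\<in>{1..m}. GI (x,k) \<or> SI (x,k)}"
  define NC where "NC = {k\<in>{1..m}. \<not> (\<forall>x\<in>{1..m}. GI (x,k) \<or> SI (x,k))}"
  have "NC \<subseteq> snd ` E" unfolding NC_def E_def D_def by force
  then have "card NC \<le> card E" using finE by (meson card_image_le card_mono finite_imageI le_trans)
  then have NCh: "card NC < h" using Eh by simp
  have CNC: "C \<union> NC = {1..m}" "C \<inter> NC = {}" unfolding C_def NC_def by auto
  then have cardC: "card C + card NC = m"
    by (metis card_Un_disjoint card_atLeastAtMost diff_Suc_1 finite_Un finite_atLeastAtMost)
  have cls: "(\<forall>x\<in>{1..m}. GI (x,k)) \<or> (\<forall>x\<in>{1..m}. SI (x,k))" if "k \<in> C" for k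
  proof (rule strip_class)
    show "GI (x,k) \<Longrightarrow> SI (Suc x,k) \<Longrightarrow> False" for x k using H1 by blast
    show "SI (x,k) \<Longrightarrow> GI (Suc x,k) \<Longrightarrow> False" for x k using H2 by blast
    show "\<forall>x\<in>{1..m}. GI (x,k) \<or> SI (x,k)" using that unfolding C_def by blast
  qed
  show False
  proof (cases "\<exists>k\<in>C. \<forall>x\<in>{1..m}. GI (x,k)")
    case P: True
    show False
    proof (cases "\<exists>k\<in>C. \<forall>x\<in>{1..m}. SI (x,k)")
      case Q: True
      obtain k1 where k1: "k1 \<in> C" "\<forall>x\<in>{1..m}. GI (x,k1)" using P by blast
      obtain k2 where k2: "k2 \<in> C" "\<forall>x\<in>{1..m}. SI (x,k2)" using Q by blast
      have mpos: "m \<ge> 1" using k1 unfolding C_def by auto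
      have "k1 \<noteq> k2"
      proof
        assume "k1 = k2"
        then have "GI (1,k1)" "SI (1,k1)" using k1(2) k2(2) mpos by auto
        then show False using disj by blast
      qed
      then consider "k1 < k2" | "k2 < k1" by linarith
      then show False
      proof cases
        case 1
        have "{x\<in>{1..m}. odd x} \<subseteq> fst ` E"
        proof
          fix x assume x0: "x \<in> {x\<in>{1..m}. odd x}"
          then have x: "x \<in> {1..m}" "odd x" by auto
          show "x \<in> fst ` E"
          proof (rule ccontr)
            assume nx: "x \<notin> fst ` E"
            have k2m: "k2 \<le> m" using k2 unfolding C_def by auto
            have ne: "\<forall>k\<in>{k1..k2}. GI (x,k) \<or> SI (x,k)"
            proof
              fix k assume k: "k \<in> {k1..k2}"
              have "k \<in> {1..m}" using k k1 k2m unfolding C_def by auto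
              then have xkD: "(x,k) \<in> D" using x unfolding D_def by auto
              show "GI (x,k) \<or> SI (x,k)"
              proof (rule ccontr)
                assume "\<not> (GI (x,k) \<or> SI (x,k))"
                then have "(x,k) \<in> E" using xkD unfolding E_def by auto
                then have "x \<in> fst ` E" by (metis fst_conv image_eqI)
                then show False using nx by blast
              qed
            qed
            have "GI (x,k2)"
            proof (rule col_prop[of "\<lambda>k. GI (x,k)" "\<lambda>k. SI (x,k)" k1 k2])
              show "GI (x,k) \<Longrightarrow> SI (x,Suc k) \<Longrightarrow> False" for k using V1[of x k] x(2) by blast
              show "\<forall>k\<in>{k1..k2}. GI (x,k) \<or> SI (x,k)" using ne .
              show "GI (x,k1)" using k1(2) x(1) by blast
              show "k1 \<le> k2" using 1 by simp
            qed
            moreover have "SI (x,k2)" using k2(2) x(1) by blast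
            ultimately show False using disj by blast
          qed
        qed
        then have "card {x\<in>{1..m}. odd x} \<le> card E"
          using finE by (meson card_image_le card_mono finite_imageI le_trans)
        then show False using card_odds[OF hdef] Eh by simp
      next
        case 2
        have "{x\<in>{1..m}. even x} \<subseteq> fst ` E"
        proof
          fix x assume x0: "x \<in> {x\<in>{1..m}. even x}"
          then have x: "x \<in> {1..m}" "even x" by auto
          show "x \<in> fst ` E"
          proof (rule ccontr)
            assume nx: "x \<notin> fst ` E"
            have k1m: "k1 \<le> m" using k1 unfolding C_def by auto
            have ne: "\<forall>k\<in>{k2..k1}. SI (x,k) \<or> GI (x,k)"
            proof
              fix k assume k: "k \<in> {k2..k1}"
              have "k \<in> {1..m}" using k k2 k1m unfolding C_def by auto
              then have xkD: "(x,k) \<in> D" using x unfolding D_def by auto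
              show "SI (x,k) \<or> GI (x,k)"
              proof (rule ccontr)
                assume "\<not> (SI (x,k) \<or> GI (x,k))"
                then have "(x,k) \<in> E" using xkD unfolding E_def by auto
                then have "x \<in> fst ` E" by (metis fst_conv image_eqI)
                then show False using nx by blast
              qed
            qed
            have "SI (x,k1)"
            proof (rule col_prop[of "\<lambda>k. SI (x,k)" "\<lambda>k. GI (x,k)" k2 k1])
              show "SI (x,k) \<Longrightarrow> GI (x,Suc k) \<Longrightarrow> False" for k using V2[of x k] x(2) by blast
              show "\<forall>k\<in>{k2..k1}. SI (x,k) \<or> GI (x,k)" using ne .
              show "SI (x,k2)" using k2(2) x(1) by blast
              show "k2 \<le> k1" using 2 by simp
            qed
            moreover have "GI (x,k1)" using k1(2) x(1) by blast
            ultimately show False using disj by blast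
          qed
        qed
        then have "card {x\<in>{1..m}. even x} \<le> card E"
          using finE by (meson card_image_le card_mono finite_imageI le_trans)
        then show False using card_evens[OF hdef] Eh by simp
      qed
    next
      case nQ: False
      have "{1..m} \<times> C \<subseteq> {d\<in>{1..m}\<times>{1..m}. GI d}"
      proof
        fix d assume d: "d \<in> {1..m} \<times> C"
        then obtain x k where dk: "d = (x,k)" "x \<in> {1..m}" "k \<in> C" by auto
        then have "\<forall>x\<in>{1..m}. GI (x,k)" using cls nQ by blast
        then show "d \<in> {d\<in>{1..m}\<times>{1..m}. GI d}" using dk unfolding C_def by auto
      qed
      then have "card ({1..m} \<times> C) \<le> card {d\<in>{1..m}\<times>{1..m}. GI d}"
        by (intro card_mono) auto
      then have "m * card C \<le> m * h" using cardG by (simp add: card_cartesian_product)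
      moreover have "card C > m - h"
      proof -
        have "h \<le> m" using hdef by simp
        then show ?thesis using cardC NCh by linarith
      qed
      moreover have "m - h \<ge> h" using hdef by simp
      moreover have "m > 0" using P unfolding C_def by auto
      ultimately have "card C \<le> h" by simp
      then show False using \<open>card C > m - h\<close> \<open>m - h \<ge> h\<close> by linarith
    qed
  next
    case nP: False
    have "{d\<in>{1..m}\<times>{1..m}. GI d} \<subseteq> {1..m} \<times> NC"
    proof
      fix d assume d: "d \<in> {d\<in>{1..m}\<times>{1..m}. GI d}"
      then obtain x k where dk: "d = (x,k)" "x \<in> {1..m}" "k \<in> {1..m}" "GI (x,k)" by auto
      have "k \<notin> C"
      proof
        assume "k \<in> C"
        then have "\<forall>x\<in>{1..m}. SI (x,k)" using cls nP by blast
        then show False using dk disj by blast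
      qed
      then have "k \<in> NC" using CNC dk by auto
      then show "d \<in> {1..m} \<times> NC" using dk by auto
    qed
    then have "card {d\<in>{1..m}\<times>{1..m}. GI d} \<le> card ({1..m} \<times> NC)"
      by (intro card_mono) (auto simp: NC_def)
    then have "m * h \<le> m * card NC" using cardG by (simp add: card_cartesian_product)
    then have "h \<le> card NC \<or> m = 0" by auto
    then show False using NCh hdef by auto
  qed
qed


lemma grid_comb:
  assumes m2: "m \<ge> 2" and XG: "X \<subseteq> grid_goals m (2*m)" and YS: "Y \<subseteq> grid_starts m (2*m)"
    and ind: "\<forall>u\<in>Y. \<forall>v\<in>X. \<not> grid_adj u v" and cX: "card X = m * (m div 2)"
  shows "card X + card Y + m div 2 \<le> m^2"
proof -
  define gv :: "nat \<times> nat \<Rightarrow> nat \<times> nat" where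
    "gv = (\<lambda>(x,k). if odd x then (x, 2*k) else (x, 2*k - 1))"
  define sv :: "nat \<times> nat \<Rightarrow> nat \<times> nat" where
    "sv = (\<lambda>(x,k). if odd x then (x, 2*k - 1) else (x, 2*k))"
  define D where "D = {1..m} \<times> {1..m}"
  define GI where "GI = (\<lambda>d. gv d \<in> X)"
  define SI where "SI = (\<lambda>d. sv d \<in> Y)"
  have gvD: "d \<in> D" if "GI d" for d
  proof -
    obtain x k where d: "d = (x,k)" by fastforce
    have "gv d \<in> grid_goals m (2*m)" using that XG unfolding GI_def by blast
    then show ?thesis unfolding d gv_def D_def grid_goals_def grid_vertex_def
      by (auto split: if_splits)
  qed
  have svD: "d \<in> D" if "SI d" for d
  proof -
    obtain x k where d: "d = (x,k)" by fastforce
    have "sv d \<in> grid_starts m (2*m)" using that YS unfolding SI_def by blast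
    then show ?thesis unfolding d sv_def D_def grid_starts_def grid_vertex_def
      by (auto split: if_splits)
  qed
  have noadj: False if "SI d" "GI d'" "grid_adj (sv d) (gv d')" for d d'
    using ind that unfolding SI_def GI_def by blast
  have disj: "\<not> (GI d \<and> SI d)" for d
  proof
    assume a: "GI d \<and> SI d"
    obtain x k where d: "d = (x,k)" by fastforce
    have "k \<ge> 1" using gvD a d unfolding D_def by auto
    then have "grid_adj (sv d) (gv d)" unfolding d sv_def gv_def grid_adj_def by auto
    then show False using noadj a by blast
  qed
  have H1: False if "GI (x,k)" "SI (Suc x,k)" for x k
  proof -
    have "k \<ge> 1" using gvD that unfolding D_def by auto
    then have "grid_adj (sv (Suc x,k)) (gv (x,k))" unfolding sv_def gv_def grid_adj_def by auto
    then show False using noadj that by blast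
  qed
  have H2: False if "SI (x,k)" "GI (Suc x,k)" for x k
  proof -
    have "k \<ge> 1" using gvD that unfolding D_def by auto
    then have "grid_adj (sv (x,k)) (gv (Suc x,k))" unfolding sv_def gv_def grid_adj_def by auto
    then show False using noadj that by blast
  qed
  have V1: False if "odd x" "GI (x,k)" "SI (x,Suc k)" for x k
  proof -
    have "grid_adj (sv (x,Suc k)) (gv (x,k))" using that(1) unfolding sv_def gv_def grid_adj_def by auto
    then show False using noadj that by blast
  qed
  have V2: False if "even x" "SI (x,k)" "GI (x,Suc k)" for x k
  proof -
    have "grid_adj (sv (x,k)) (gv (x,Suc k))" using that(1) unfolding sv_def gv_def grid_adj_def by auto
    then show False using noadj that by blast
  qed
  have injg: "inj_on gv D" unfolding inj_on_def gv_def D_def by (auto split: if_splits)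
  have injs: "inj_on sv D" unfolding inj_on_def sv_def D_def by (auto split: if_splits)
  have surjg: "v \<in> gv ` D" if "v \<in> grid_goals m (2*m)" for v
  proof -
    obtain x y where v: "v = (x,y)" by fastforce
    have c: "1 \<le> x" "x \<le> m" "1 \<le> y" "y \<le> 2*m" "odd (x+y)"
      using that unfolding v grid_goals_def grid_vertex_def by auto
    show ?thesis
    proof (cases "odd x")
      case True
      then have "even y" using c by auto
      then have "v = gv (x, y div 2)" "(x, y div 2) \<in> D" using True c unfolding v gv_def D_def by auto
      then show ?thesis by blast
    next
      case False
      then have "odd y" using c by auto
      then have "y < 2*m"
      proof -
        have "y \<noteq> 2*m" using \<open>odd y\<close> by auto
        then show ?thesis using c(4) by simp
      qed
      then have "v = gv (x, (y+1) div 2)" "(x, (y+1) div 2) \<in> D" using False c unfolding v gv_def D_def by auto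
      then show ?thesis by blast
    qed
  qed
  have surjs: "v \<in> sv ` D" if "v \<in> grid_starts m (2*m)" for v
  proof -
    obtain x y where v: "v = (x,y)" by fastforce
    have c: "1 \<le> x" "x \<le> m" "1 \<le> y" "y \<le> 2*m" "even (x+y)"
      using that unfolding v grid_starts_def grid_vertex_def by auto
    show ?thesis
    proof (cases "odd x")
      case True
      then have "odd y" using c by auto
      then have "y < 2*m"
      proof -
        have "y \<noteq> 2*m" using \<open>odd y\<close> by auto
        then show ?thesis using c(4) by simp
      qed
      then have "v = sv (x, (y+1) div 2)" "(x, (y+1) div 2) \<in> D" using True c unfolding v sv_def D_def by auto
      then show ?thesis by blast
    next
      case False
      then have "even y" using c by auto
      then have "v = sv (x, y div 2)" "(x, y div 2) \<in> D" using False c unfolding v sv_def D_def by auto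
      then show ?thesis by blast
    qed
  qed
  have Xim: "X = gv ` {d\<in>D. GI d}"
  proof
    show "X \<subseteq> gv ` {d\<in>D. GI d}"
    proof
      fix v assume v: "v \<in> X"
      then obtain d where "d \<in> D" "v = gv d" using surjg XG by blast
      then show "v \<in> gv ` {d\<in>D. GI d}" using v unfolding GI_def by blast
    qed
    show "gv ` {d\<in>D. GI d} \<subseteq> X" unfolding GI_def by blast
  qed
  have Yim: "Y = sv ` {d\<in>D. SI d}"
  proof
    show "Y \<subseteq> sv ` {d\<in>D. SI d}"
    proof
      fix v assume v: "v \<in> Y"
      then obtain d where "d \<in> D" "v = sv d" using surjs YS by blast
      then show "v \<in> sv ` {d\<in>D. SI d}" using v unfolding SI_def by blast
    qed
    show "sv ` {d\<in>D. SI d} \<subseteq> Y" unfolding SI_def by blast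
  qed
  have cX2: "card X = card {d\<in>D. GI d}"
    unfolding Xim by (rule card_image) (rule inj_on_subset[OF injg], blast)
  have cY2: "card Y = card {d\<in>D. SI d}"
    unfolding Yim by (rule card_image) (rule inj_on_subset[OF injs], blast)
  define E where "E = {d\<in>D. \<not> GI d \<and> \<not> SI d}"
  have finD: "finite D" unfolding D_def by simp
  have "D = ({d\<in>D. GI d} \<union> {d\<in>D. SI d}) \<union> E" unfolding E_def by blast
  moreover have "card (({d\<in>D. GI d} \<union> {d\<in>D. SI d}) \<union> E) = card ({d\<in>D. GI d} \<union> {d\<in>D. SI d}) + card E"
    by (rule card_Un_disjoint) (use finD in \<open>auto simp: E_def\<close>)
  ultimately have "card D = card ({d\<in>D. GI d} \<union> {d\<in>D. SI d}) + card E" by simp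
  also have "card ({d\<in>D. GI d} \<union> {d\<in>D. SI d}) = card {d\<in>D. GI d} + card {d\<in>D. SI d}"
    using finD disj by (intro card_Un_disjoint) auto
  finally have cD: "card D = card X + card Y + card E" using cX2 cY2 by simp
  have "card D = m * m" unfolding D_def by (simp add: card_cartesian_product)
  moreover have "m div 2 \<le> card E"
    unfolding E_def D_def
  proof (rule comb_abstract[where GI=GI and SI=SI])
    show "m div 2 = m div 2" by simp
    show "\<not> (GI d \<and> SI d)" for d using disj .
    show "GI (x,k) \<Longrightarrow> SI (Suc x,k) \<Longrightarrow> False" for x k using H1 by blast
    show "SI (x,k) \<Longrightarrow> GI (Suc x,k) \<Longrightarrow> False" for x k using H2 by blast
    show "odd x \<Longrightarrow> GI (x,k) \<Longrightarrow> SI (x,Suc k) \<Longrightarrow> False" for x k using V1 by blast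
    show "even x \<Longrightarrow> SI (x,k) \<Longrightarrow> GI (x,Suc k) \<Longrightarrow> False" for x k using V2 by blast
    show "card {d\<in>{1..m}\<times>{1..m}. GI d} = m * (m div 2)" using cX cX2 unfolding D_def by simp
  qed
  ultimately show ?thesis using cD by (simp add: power2_eq_square)
qed


definition inv_st :: "complex set \<Rightarrow> nat \<Rightarrow> (nat \<Rightarrow> pose) \<Rightarrow> (nat \<Rightarrow> pose) \<Rightarrow> state \<Rightarrow> bool" where
  "inv_st F n s g st \<longleftrightarrow> (case st of (S,G,b) \<Rightarrow> S \<subseteq> {..<n} \<and> G \<subseteq> {..<n} \<and> b + card S + card G = n \<and>
      (\<forall>i\<in>S. \<forall>j\<in>G. \<not> overlap F (s i) (g j)))"

lemma step_inv:
  assumes st: "step F n s g a (S,G,b) = Some (S',G',b')" and inv: "inv_st F n s g (S,G,b)"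
  shows "inv_st F n s g (S',G',b') \<and> card G' \<le> Suc (card G)"
proof -
  have fS: "finite S" and fG: "finite G" using inv unfolding inv_st_def by (auto intro: finite_subset)
  show ?thesis
  proof (cases a)
    case (ToGoal i j)
    then have c: "i \<in> S" "j < n" "j \<notin> G" "placeable F s g (S - {i}) G (g j)"
      and e: "S' = S - {i}" "G' = insert j G" "b' = b" using st by (auto split: if_splits)
    have "card S \<ge> 1" using c(1) fS by (metis One_nat_def Suc_leI card_gt_0_iff empty_iff)
    then show ?thesis using inv c e fS fG unfolding inv_st_def placeable_def by auto
  next
    case (ToBuffer i)
    then have c: "i \<in> S" and e: "S' = S - {i}" "G' = G" "b' = Suc b" using st by (auto split: if_splits)
    have "card S \<ge> 1" using c(1) fS by (metis One_nat_def Suc_leI card_gt_0_iff empty_iff)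
    then show ?thesis using inv c e fS fG unfolding inv_st_def by auto
  next
    case (FromBuffer j)
    then have c: "0 < b" "j < n" "j \<notin> G" "placeable F s g S G (g j)"
      and e: "S' = S" "G' = insert j G" "b' = b - 1" using st by (auto split: if_splits)
    then show ?thesis using inv c e fS fG unfolding inv_st_def placeable_def by auto
  qed
qed

lemma exec_ne: "exec F n s g st as = Some sts \<Longrightarrow> sts \<noteq> [] \<and> hd sts = st"
  by (induction as arbitrary: st sts) (auto split: option.splits)

lemma exec_ivt:
  "exec F n s g st as = Some sts \<Longrightarrow> inv_st F n s g st \<Longrightarrow> card (fst (snd st)) \<le> T \<Longrightarrow>
   T \<le> card (fst (snd (last sts))) \<Longrightarrow> \<exists>st'\<in>set sts. inv_st F n s g st' \<and> card (fst (snd st')) = T"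
proof (induction as arbitrary: st sts)
  case Nil
  then show ?case by auto
next
  case (Cons a as)
  obtain st1 where s1: "step F n s g a st = Some st1"
    using Cons.prems(1) by (auto split: option.splits)
  then obtain sts1 where e1: "exec F n s g st1 as = Some sts1" and sts: "sts = st # sts1"
    using Cons.prems(1) by (auto split: option.splits)
  have ne: "sts1 \<noteq> []" using exec_ne[OF e1] by simp
  show ?case
  proof (cases "card (fst (snd st)) = T")
    case True then show ?thesis using Cons.prems(2) sts by auto
  next
    case False
    obtain S G b where stv: "st = (S,G,b)" by (cases st) auto
    obtain S' G' b' where st1v: "st1 = (S',G',b')" by (cases st1) auto
    have "inv_st F n s g st1 \<and> card G' \<le> Suc (card G)"
      using step_inv[of F n s g a S G b S' G' b'] s1 Cons.prems(2) stv st1v by simp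
    moreover have "card G < T" using False Cons.prems(3) stv by simp
    ultimately have "inv_st F n s g st1" "card (fst (snd st1)) \<le> T" using st1v by auto
    moreover have "T \<le> card (fst (snd (last sts1)))" using Cons.prems(4) sts ne by simp
    ultimately obtain st' where "st' \<in> set sts1" "inv_st F n s g st' \<and> card (fst (snd st')) = T"
      using Cons.IH[OF e1] by blast
    then show ?thesis using sts by auto
  qed
qed

lemma exec_append:
  "exec F n s g st as = Some sts \<Longrightarrow> exec F n s g (last sts) bs = Some sts2 \<Longrightarrow>
   \<exists>sts3. exec F n s g st (as @ bs) = Some sts3 \<and> last sts3 = last sts2"
proof (induction as arbitrary: st sts)
  case Nil
  then show ?case by auto
next
  case (Cons a as)
  obtain st1 where s1: "step F n s g a st = Some st1"
    using Cons.prems(1) by (auto split: option.splits)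
  then obtain sts1 where e1: "exec F n s g st1 as = Some sts1" and sts: "sts = st # sts1"
    using Cons.prems(1) by (auto split: option.splits)
  have ne: "sts1 \<noteq> []" using exec_ne[OF e1] by simp
  then have "exec F n s g (last sts1) bs = Some sts2" using Cons.prems(2) sts by simp
  then obtain sts3 where e3: "exec F n s g st1 (as @ bs) = Some sts3" "last sts3 = last sts2"
    using Cons.IH[OF e1] by blast
  have "sts3 \<noteq> []" using exec_ne[OF e3(1)] by simp
  then show ?case using s1 e3 by auto
qed

lemma exec_tobuf:
  "set xs \<subseteq> S \<Longrightarrow> distinct xs \<Longrightarrow>
   \<exists>sts. exec F n s g (S,G,b) (map ToBuffer xs) = Some sts \<and> last sts = (S - set xs, G, b + length xs)"
proof (induction xs arbitrary: S b)
  case Nil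
  then show ?case by simp
next
  case (Cons x xs)
  have "set xs \<subseteq> S - {x}" "distinct xs" using Cons.prems by auto
  then obtain sts where e: "exec F n s g (S - {x},G,Suc b) (map ToBuffer xs) = Some sts"
    "last sts = (S - {x} - set xs, G, Suc b + length xs)" using Cons.IH by blast
  have "sts \<noteq> []" using exec_ne[OF e(1)] by simp
  then show ?case using e Cons.prems by (auto simp: set_diff_eq)
qed

lemma exec_frombuf:
  assumes "feasible_arr F n g"
  shows "set xs \<subseteq> {..<n} \<Longrightarrow> distinct xs \<Longrightarrow> set xs \<inter> G = {} \<Longrightarrow> G \<subseteq> {..<n} \<Longrightarrow> length xs \<le> b \<Longrightarrow>
   \<exists>sts. exec F n s g ({},G,b) (map FromBuffer xs) = Some sts \<and> last sts = ({}, G \<union> set xs, b - length xs)"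
proof (induction xs arbitrary: G b)
  case Nil
  then show ?case by simp
next
  case (Cons x xs)
  have pl: "placeable F s g {} G (g x)"
    unfolding placeable_def
  proof (intro conjI ballI)
    fix j assume j: "j \<in> G"
    then have "j \<noteq> x" "j < n" "x < n" using Cons.prems by auto
    then show "\<not> overlap F (g j) (g x)" using assms unfolding feasible_arr_def by blast
  qed simp
  have "set xs \<subseteq> {..<n}" "distinct xs" "set xs \<inter> insert x G = {}" "insert x G \<subseteq> {..<n}" "length xs \<le> b - 1"
    using Cons.prems by auto
  then obtain sts where e: "exec F n s g ({},insert x G,b - 1) (map FromBuffer xs) = Some sts"
    "last sts = ({}, insert x G \<union> set xs, b - 1 - length xs)" using Cons.IH by blast
  have "sts \<noteq> []" using exec_ne[OF e(1)] by simp
  moreover have "step F n s g (FromBuffer x) ({},G,b) = Some ({}, insert x G, b - 1)"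
    using pl Cons.prems by auto
  ultimately show ?case using e by auto
qed

lemma valid_exists:
  assumes "feasible_arr F n g"
  shows "valid_plan F n s g (map ToBuffer [0..<n] @ map FromBuffer [0..<n])"
proof -
  have "\<exists>sts. exec F n s g ({..<n},{},0) (map ToBuffer [0..<n]) = Some sts \<and>
    last sts = ({..<n} - set [0..<n], {}, 0 + length [0..<n])"
    by (rule exec_tobuf) auto
  then obtain sts where e1: "exec F n s g ({..<n},{},0) (map ToBuffer [0..<n]) = Some sts"
    "last sts = ({..<n} - set [0..<n], {}, 0 + length [0..<n])" by blast
  then have l1: "last sts = ({}, {}, n)" by auto
  have "\<exists>sts2. exec F n s g ({},{},n) (map FromBuffer [0..<n]) = Some sts2 \<and>
    last sts2 = ({}, {} \<union> set [0..<n], n - length [0..<n])"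
    by (rule exec_frombuf[OF assms]) auto
  then obtain sts2 where e2: "exec F n s g ({},{},n) (map FromBuffer [0..<n]) = Some sts2"
    "last sts2 = ({}, {} \<union> set [0..<n], n - length [0..<n])" by blast
  obtain sts3 where "exec F n s g ({..<n},{},0) (map ToBuffer [0..<n] @ map FromBuffer [0..<n]) = Some sts3"
     "last sts3 = last sts2"
    using exec_append[OF e1(1), of "map FromBuffer [0..<n]" sts2] e2(1) l1 by auto
  then show ?thesis unfolding valid_plan_def init_state_def using e2(2) by auto
qed

theorem lemma2:
  shows "\<exists>c::real. c > 0 \<and> (\<exists>m0::nat. \<forall>m\<ge>m0.
     \<forall>(F::complex set) (W::complex set) (s::nat \<Rightarrow> pose) (g::nat \<Rightarrow> pose).
       utr_instance F W (m\<^sup>2) s g \<and> dep_graph_iso_grid F (m\<^sup>2) s g m (2 * m)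
       \<longrightarrow> c * real m \<le> real (MRB F (m\<^sup>2) s g))"
proof (intro exI conjI allI impI)
  show "(1/4::real) > 0" by simp
  fix m :: nat and F W s g
  assume m2: "2 \<le> m" and H: "utr_instance F W (m\<^sup>2) s g \<and> dep_graph_iso_grid F (m\<^sup>2) s g m (2 * m)"
  define n where "n = m^2"
  define h where "h = m div 2"
  have feas: "feasible_arr F n g" using H unfolding utr_instance_def n_def by blast
  obtain \<sigma> \<tau> where bs: "bij_betw \<sigma> {..<n} (grid_starts m (2*m))"
    and bt: "bij_betw \<tau> {..<n} (grid_goals m (2*m))"
    and ov: "\<forall>i<n. \<forall>j<n. overlap F (s i) (g j) \<longleftrightarrow> grid_adj (\<sigma> i) (\<tau> j)"
    using H unfolding dep_graph_iso_grid_def n_def by blast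
  have key: "h \<le> max_running_buffers F n s g p" if vp: "valid_plan F n s g p" for p
  proof -
    obtain sts where e: "exec F n s g (init_state n) p = Some sts" and l: "fst (snd (last sts)) = {..<n}"
      using vp unfolding valid_plan_def by blast
    have i0: "inv_st F n s g (init_state n)" unfolding inv_st_def init_state_def by simp
    have "h \<le> m" unfolding h_def by simp
    then have "m * h \<le> m * m" by simp
    then have Tle: "m * h \<le> card (fst (snd (last sts)))" using l unfolding n_def by (simp add: power2_eq_square)
    obtain st' where st': "st' \<in> set sts" "inv_st F n s g st'" "card (fst (snd st')) = m * h"
      using exec_ivt[OF e i0 _ Tle] unfolding init_state_def by auto
    obtain S G b where stv: "st' = (S,G,b)" by (cases st') auto
    have iv: "S \<subseteq> {..<n}" "G \<subseteq> {..<n}" "b + card S + card G = n" "\<forall>i\<in>S. \<forall>j\<in>G. \<not> overlap F (s i) (g j)"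
      using st'(2) stv unfolding inv_st_def by auto
    have cG: "card G = m * h" using st'(3) stv by simp
    have injs: "inj_on \<sigma> S" using bs iv(1) unfolding bij_betw_def by (meson inj_on_subset)
    have injt: "inj_on \<tau> G" using bt iv(2) unfolding bij_betw_def by (meson inj_on_subset)
    have XG: "\<tau> ` G \<subseteq> grid_goals m (2*m)" using bt iv(2) unfolding bij_betw_def by blast
    have YS: "\<sigma> ` S \<subseteq> grid_starts m (2*m)" using bs iv(1) unfolding bij_betw_def by blast
    have ind: "\<forall>u\<in>\<sigma> ` S. \<forall>v\<in>\<tau> ` G. \<not> grid_adj u v"
    proof (intro ballI)
      fix u v assume u: "u \<in> \<sigma> ` S" and v: "v \<in> \<tau> ` G"
      then obtain i j where ij: "i \<in> S" "j \<in> G" "u = \<sigma> i" "v = \<tau> j" by blast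
      then have "i < n" "j < n" using iv by auto
      then show "\<not> grid_adj u v" using ov iv(4) ij by blast
    qed
    have "card (\<tau> ` G) + card (\<sigma> ` S) + m div 2 \<le> m^2"
      by (rule grid_comb[OF m2 XG YS ind]) (simp add: card_image[OF injt] cG h_def)
    then have "card G + card S + h \<le> n" using card_image[OF injt] card_image[OF injs]
      unfolding n_def h_def by simp
    then have bh: "h \<le> b" using iv(3) by simp
    have "b \<in> (\<lambda>st. snd (snd st)) ` set sts" using st'(1) stv by force
    then have "b \<le> max_running_buffers F n s g p"
      unfolding max_running_buffers_def using e by (simp add: Max_ge)
    then show ?thesis using bh by simp
  qed
  have "h \<le> MRB F n s g"
    unfolding MRB_def
    by (rule cINF_greatest) (use valid_exists[OF feas, of s] key in auto)
  moreover have "(1/4) * real m \<le> real h"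
  proof -
    have "m \<le> 4 * h" using m2 unfolding h_def by linarith
    then show ?thesis by simp
  qed
  ultimately show "(1/4) * real m \<le> real (MRB F (m\<^sup>2) s g)" unfolding n_def by simp
qed

end
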